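(* Let $m\ge1$ and $a_1,\dots,a_{2m},b_1,\dots,b_{2m}\in\mathbb{C}$. Assume there exists $j^*\in\mathbb{N}$ such that $\lambda_{2j}=0$ for all $1\le j\le j^*$. Then $\mathrm{Im}\,a_{2j}=\lambda^+_{2j}=0$ for all $1\le j\le j^*$, and $\lambda^-_j=0$ for all $1\le j\le 2j^*+3$ (with $j\le 2m-1$).
   Context: Empty sums are zero. Constants: $\gamma_j=b_{2j}-\sum_{k=1}^{j-1}\bar a_{2(j-k)}\gamma_k$ ($1\le j\le m-1$); $\lambda_{2j}=2\,\mathrm{Im}\,a_{2j}-2\sum_{k=1}^{j-1}\mathrm{Im}(\bar b_{2(j-k)}\gamma_k)$ ($1\le j\le m-1$); $\alpha_j=b_j-\frac12\sum_{k=1}^{j-1}(1+(-1)^{j-k})\bar a_{j-k}\alpha_k$, $\lambda_j^+=2\,\mathrm{Im}\,a_j+\sum_{k=1}^{j-1}(-1)^{j-k+1}\mathrm{Im}(\bar b_{j-k}\alpha_k)$, $\lambda_j^-=-\sum_{k=1}^{j-1}\mathrm{Im}(\bar b_{j-k}\alpha_k)$ ($1\le j\le 2m-1$). *)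

theory Defs
  imports Complex_Main
begin

text \<open>Sequences a_1..a_2m, b_1..b_2m are modelled as functions nat => complex;
only the indices 1..2m are ever used.\<close>

function gamma :: "(nat \<Rightarrow> complex) \<Rightarrow> (nat \<Rightarrow> complex) \<Rightarrow> nat \<Rightarrow> complex" where
  "gamma a b j = b (2*j) - (\<Sum>k\<in>{1..<j}. cnj (a (2*(j-k))) * gamma a b k)"
  by auto
termination by (relation "measure (\<lambda>(a,b,j). j)") auto

definition lam2 :: "(nat \<Rightarrow> complex) \<Rightarrow> (nat \<Rightarrow> complex) \<Rightarrow> nat \<Rightarrow> real" where
  "lam2 a b j = 2 * Im (a (2*j)) - 2 * (\<Sum>k\<in>{1..<j}. Im (cnj (b (2*(j-k))) * gamma a b k))"

function alpha :: "(nat \<Rightarrow> complex) \<Rightarrow> (nat \<Rightarrow> complex) \<Rightarrow> nat \<Rightarrow> complex" where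
  "alpha a b j = b j - (1/2) * (\<Sum>k\<in>{1..<j}. (1 + (-1)^(j-k)) * cnj (a (j-k)) * alpha a b k)"
  by auto
termination by (relation "measure (\<lambda>(a,b,j). j)") auto

definition lam_plus :: "(nat \<Rightarrow> complex) \<Rightarrow> (nat \<Rightarrow> complex) \<Rightarrow> nat \<Rightarrow> real" where
  "lam_plus a b j = 2 * Im (a j) + (\<Sum>k\<in>{1..<j}. (-1)^(j-k+1) * Im (cnj (b (j-k)) * alpha a b k))"

definition lam_minus :: "(nat \<Rightarrow> complex) \<Rightarrow> (nat \<Rightarrow> complex) \<Rightarrow> nat \<Rightarrow> real" where
  "lam_minus a b j = - (\<Sum>k\<in>{1..<j}. Im (cnj (b (j-k)) * alpha a b k))"

end

theory Submission
  imports Defs "HOL-Computational_Algebra.Formal_Power_Series"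
begin

definition fcnj :: "complex fps \<Rightarrow> complex fps" where
  "fcnj f = Abs_fps (\<lambda>n. cnj (fps_nth (f) n))"

lemma fcnj_nth[simp]: "fps_nth (fcnj f) n = cnj (fps_nth (f) n)"
  by (simp add: fcnj_def)

lemma fcnj_mult: "fcnj (f*g) = fcnj f * fcnj g"
  by (simp add: fps_eq_iff fps_mult_nth)

lemma fcnj_fcnj[simp]: "fcnj (fcnj f) = f"
  by (simp add: fps_eq_iff)

definition falt :: "complex fps \<Rightarrow> complex fps" where
  "falt f = Abs_fps (\<lambda>n. (-1)^n * fps_nth (f) n)"

lemma falt_nth[simp]: "fps_nth (falt f) n = (-1)^n * fps_nth (f) n"
  by (simp add: falt_def)

lemma falt_mult: "falt (f*g) = falt f * falt g"
proof -
  have "(-1::complex)^n * (\<Sum>i=0..n. fps_nth (f) i * fps_nth (g) (n-i)) = (\<Sum>i=0..n. ((-1)^i * fps_nth (f) i) * ((-1)^(n-i) * fps_nth (g) (n-i)))" for n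
    unfolding sum_distrib_left
  proof (rule sum.cong)
    fix i assume "i \<in> {0..n}"
    then have "(-1::complex)^n = (-1)^i * (-1)^(n-i)"
      by (metis atLeastAtMost_iff le_add_diff_inverse power_add)
    then show "(-1::complex)^n * (fps_nth (f) i * fps_nth (g) (n-i)) = ((-1)^i * fps_nth (f) i) * ((-1)^(n-i) * fps_nth (g) (n-i))"
      by simp
  qed simp
  then show ?thesis by (simp add: fps_eq_iff fps_mult_nth)
qed

lemma falt_one[simp]: "falt 1 = 1"
  by (simp add: fps_eq_iff)

lemma Im_zero_if_cnj: "cnj x = x \<Longrightarrow> Im x = 0"
  by (metis complex_cnj_cancel_iff complex_eq_cancel_iff2 cnj.simps(2) neg_equal_zero)

lemma inverse_real:
  fixes E :: "complex fps"
  assumes "fps_nth (E) 0 = 1" "\<forall>i\<le>N. Im (fps_nth (E) i) = 0" "n \<le> N"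
  shows "Im (fps_nth (inverse E) n) = 0"
  using assms(3)
proof (induction n rule: less_induct)
  case (less n)
  show ?case
  proof (cases n)
    case 0 then show ?thesis using assms by simp
  next
    case (Suc k)
    have "fps_nth (inverse E * E) n = 0" using assms(1) Suc by (simp add: inverse_mult_eq_1)
    then have "(\<Sum>i=0..n. fps_nth (inverse E) i * fps_nth (E) (n-i)) = 0" by (simp add: fps_mult_nth)
    moreover have "(\<Sum>i=0..n. fps_nth (inverse E) i * fps_nth (E) (n-i)) = (\<Sum>i=0..<n. fps_nth (inverse E) i * fps_nth (E) (n-i)) + fps_nth (inverse E) n"
      using assms(1) by (simp add: atLeastLessThanSuc_atLeastAtMost[symmetric] Suc)
    ultimately have eq: "fps_nth (inverse E) n = - (\<Sum>i=0..<n. fps_nth (inverse E) i * fps_nth (E) (n-i))"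
      by (simp add: eq_neg_iff_add_eq_0 add.commute)
    have "Im (fps_nth (inverse E) i * fps_nth (E) (n-i)) = 0" if "i < n" for i
      using less.IH[of i] that less.prems assms(2) by simp
    then show ?thesis unfolding eq by simp
  qed
qed

lemma Im_mult_zero: "Im x = 0 \<Longrightarrow> Im y = 0 \<Longrightarrow> Im (x*y) = 0"
  by simp


declare alpha.simps[simp del] gamma.simps[simp del]

lemma sum_restrict:
  fixes g :: "nat \<Rightarrow> 'b::comm_monoid_add"
  assumes "g 0 = 0" "g n = 0"
  shows "(\<Sum>i=0..n. g i) = (\<Sum>i\<in>{1..<n}. g i)"
proof -
  have "(\<Sum>i\<in>{1..<n}. g i) = (\<Sum>i=0..n. g i)"
  proof (rule sum.mono_neutral_left)
    show "\<forall>i\<in>{0..n} - {1..<n}. g i = 0"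
    proof
      fix i assume "i \<in> {0..n} - {1..<n}"
      then have "i = 0 \<or> i = n" by auto
      then show "g i = 0" using assms by auto
    qed
  qed auto
  then show ?thesis by simp
qed

definition Bf :: "(nat \<Rightarrow> complex) \<Rightarrow> complex fps" where
  "Bf b = Abs_fps (\<lambda>n. if n = 0 then 0 else b n)"
definition Alf :: "(nat \<Rightarrow> complex) \<Rightarrow> (nat \<Rightarrow> complex) \<Rightarrow> complex fps" where
  "Alf a b = Abs_fps (\<lambda>n. if n = 0 then 0 else alpha a b n)"
definition Ef :: "(nat \<Rightarrow> complex) \<Rightarrow> complex fps" where
  "Ef a = Abs_fps (\<lambda>n. if n = 0 then 1 else if even n then cnj (a n) else 0)"
definition Bef :: "(nat \<Rightarrow> complex) \<Rightarrow> complex fps" where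
  "Bef b = Abs_fps (\<lambda>n. if n = 0 then 0 else b (2*n))"
definition Gaf :: "(nat \<Rightarrow> complex) \<Rightarrow> (nat \<Rightarrow> complex) \<Rightarrow> complex fps" where
  "Gaf a b = Abs_fps (\<lambda>n. if n = 0 then 0 else gamma a b n)"
definition E2f :: "(nat \<Rightarrow> complex) \<Rightarrow> complex fps" where
  "E2f a = Abs_fps (\<lambda>n. if n = 0 then 1 else cnj (a (2*n)))"

lemma Ef_Alf: "Ef a * Alf a b = Bf b"
proof (rule fps_ext)
  fix n
  show "fps_nth (Ef a * Alf a b) n = fps_nth (Bf b) n"
  proof (cases "n = 0")
    case True then show ?thesis by (simp add: Ef_def Alf_def Bf_def)
  next
    case False
    let ?g = "\<lambda>i. fps_nth (Ef a) i * fps_nth (Alf a b) (n - i)"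
    have "(\<Sum>i=0..n. ?g i) = ?g 0 + (\<Sum>i=1..n. ?g i)"
      by (simp add: sum.atLeast_Suc_atMost)
    also have "(\<Sum>i=1..n. ?g i) = (\<Sum>i\<in>{1..<n}. ?g i) + ?g n"
      using False by (simp add: atLeastLessThanSuc_atLeastAtMost[symmetric] del: atLeastLessThanSuc_atLeastAtMost)
    also have "?g n = 0" by (simp add: Alf_def)
    also have "?g 0 = alpha a b n" using False by (simp add: Ef_def Alf_def)
    also have "(\<Sum>i\<in>{1..<n}. ?g i) = (\<Sum>k\<in>{1..<n}. ?g (n - k))"
      by (rule sum.reindex_bij_witness[of _ "\<lambda>k. n - k" "\<lambda>i. n - i"]) auto
    also have "\<dots> = (1/2) * (\<Sum>k\<in>{1..<n}. (1 + (-1)^(n-k)) * cnj (a (n-k)) * alpha a b k)"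
      unfolding sum_distrib_left
    proof (rule sum.cong)
      fix k assume k: "k \<in> {1..<n}"
      then have nk: "n - (n - k) = k" "n - k \<noteq> 0" "k \<noteq> 0" by auto
      show "?g (n - k) = (1/2) * ((1 + (-1)^(n-k)) * cnj (a (n-k)) * alpha a b k)"
        using nk by (cases "even (n-k)") (simp_all add: Ef_def Alf_def)
    qed simp
    finally have "fps_nth (Ef a * Alf a b) n = alpha a b n + (1/2) * (\<Sum>k\<in>{1..<n}. (1 + (-1)^(n-k)) * cnj (a (n-k)) * alpha a b k)"
      by (simp add: fps_mult_nth)
    also have "\<dots> = b n" by (subst alpha.simps) simp
    finally show ?thesis using False by (simp add: Bf_def)
  qed
qed

lemma E2f_Gaf: "E2f a * Gaf a b = Bef b"
proof (rule fps_ext)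
  fix n
  show "fps_nth (E2f a * Gaf a b) n = fps_nth (Bef b) n"
  proof (cases "n = 0")
    case True then show ?thesis by (simp add: E2f_def Gaf_def Bef_def)
  next
    case False
    let ?g = "\<lambda>i. fps_nth (E2f a) i * fps_nth (Gaf a b) (n - i)"
    have "(\<Sum>i=0..n. ?g i) = ?g 0 + (\<Sum>i=1..n. ?g i)"
      by (simp add: sum.atLeast_Suc_atMost)
    also have "(\<Sum>i=1..n. ?g i) = (\<Sum>i\<in>{1..<n}. ?g i) + ?g n"
      using False by (simp add: atLeastLessThanSuc_atLeastAtMost[symmetric] del: atLeastLessThanSuc_atLeastAtMost)
    also have "?g n = 0" by (simp add: Gaf_def)
    also have "?g 0 = gamma a b n" using False by (simp add: E2f_def Gaf_def)
    also have "(\<Sum>i\<in>{1..<n}. ?g i) = (\<Sum>k\<in>{1..<n}. ?g (n - k))"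
      by (rule sum.reindex_bij_witness[of _ "\<lambda>k. n - k" "\<lambda>i. n - i"]) auto
    also have "\<dots> = (\<Sum>k\<in>{1..<n}. cnj (a (2*(n-k))) * gamma a b k)"
    proof (rule sum.cong)
      fix k assume k: "k \<in> {1..<n}"
      then have nk: "n - (n - k) = k" "n - k \<noteq> 0" "k \<noteq> 0" by auto
      show "?g (n - k) = cnj (a (2*(n-k))) * gamma a b k"
        using nk by (simp add: E2f_def Gaf_def)
    qed simp
    finally have "fps_nth (E2f a * Gaf a b) n = gamma a b n + (\<Sum>k\<in>{1..<n}. cnj (a (2*(n-k))) * gamma a b k)"
      by (simp add: fps_mult_nth)
    also have "\<dots> = b (2*n)" by (subst gamma.simps) simp
    finally show ?thesis using False by (simp add: Bef_def)
  qed
qed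

lemma Alf_eq: "Alf a b = inverse (Ef a) * Bf b"
proof -
  have "inverse (Ef a) * Ef a = 1" by (rule inverse_mult_eq_1) (simp add: Ef_def)
  then have "Alf a b = (inverse (Ef a) * Ef a) * Alf a b" by simp
  also have "\<dots> = inverse (Ef a) * Bf b" by (simp add: mult.assoc Ef_Alf)
  finally show ?thesis .
qed

lemma Gaf_eq: "Gaf a b = inverse (E2f a) * Bef b"
proof -
  have "inverse (E2f a) * E2f a = 1" by (rule inverse_mult_eq_1) (simp add: E2f_def)
  then have "Gaf a b = (inverse (E2f a) * E2f a) * Gaf a b" by simp
  also have "\<dots> = inverse (E2f a) * Bef b" by (simp add: mult.assoc E2f_Gaf)
  finally show ?thesis .
qed


lemma lam_minus_eq: "lam_minus a b j = - Im (fps_nth (Alf a b * fcnj (Bf b)) j)"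
proof -
  have "fps_nth (Alf a b * fcnj (Bf b)) j = (\<Sum>i=0..j. fps_nth (Alf a b) i * cnj (fps_nth (Bf b) (j - i)))"
    by (simp add: fps_mult_nth)
  also have "\<dots> = (\<Sum>i\<in>{1..<j}. fps_nth (Alf a b) i * cnj (fps_nth (Bf b) (j - i)))"
    by (rule sum_restrict) (simp_all add: Alf_def Bf_def)
  also have "\<dots> = (\<Sum>k\<in>{1..<j}. cnj (b (j-k)) * alpha a b k)"
    by (rule sum.cong) (auto simp: Alf_def Bf_def)
  finally show ?thesis by (simp add: lam_minus_def)
qed

lemma lam2_eq: "lam2 a b j = 2 * Im (a (2*j)) - 2 * Im (fps_nth (Gaf a b * fcnj (Bef b)) j)"
proof -
  have "fps_nth (Gaf a b * fcnj (Bef b)) j = (\<Sum>i=0..j. fps_nth (Gaf a b) i * cnj (fps_nth (Bef b) (j - i)))"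
    by (simp add: fps_mult_nth)
  also have "\<dots> = (\<Sum>i\<in>{1..<j}. fps_nth (Gaf a b) i * cnj (fps_nth (Bef b) (j - i)))"
    by (rule sum_restrict) (simp_all add: Gaf_def Bef_def)
  also have "\<dots> = (\<Sum>k\<in>{1..<j}. cnj (b (2*(j-k))) * gamma a b k)"
    by (rule sum.cong) (auto simp: Gaf_def Bef_def diff_mult_distrib2)
  finally show ?thesis by (simp add: lam2_def)
qed

lemma lam_plus_eq: "lam_plus a b (2*j) = 2 * Im (a (2*j)) - Im (fps_nth (falt (Alf a b) * fcnj (Bf b)) (2*j))"
proof -
  have "fps_nth (falt (Alf a b) * fcnj (Bf b)) (2*j) = (\<Sum>i=0..2*j. fps_nth (falt (Alf a b)) i * cnj (fps_nth (Bf b) (2*j - i)))"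
    by (simp add: fps_mult_nth)
  also have "\<dots> = (\<Sum>i\<in>{1..<2*j}. fps_nth (falt (Alf a b)) i * cnj (fps_nth (Bf b) (2*j - i)))"
    by (rule sum_restrict) (simp_all add: Alf_def Bf_def)
  finally have "Im (fps_nth (falt (Alf a b) * fcnj (Bf b)) (2*j)) = (\<Sum>k\<in>{1..<2*j}. Im ((-1)^k * alpha a b k * cnj (b (2*j-k))))"
    by (auto simp: Alf_def Bf_def intro!: sum.cong)
  also have "\<dots> = - (\<Sum>k\<in>{1..<2*j}. (-1)^(2*j-k+1) * Im (cnj (b (2*j-k)) * alpha a b k))"
    unfolding sum_negf[symmetric]
  proof (rule sum.cong)
    fix k assume k: "k \<in> {1..<2*j}"
    show "Im ((-1)^k * alpha a b k * cnj (b (2*j-k))) = - ((-1)^(2*j-k+1) * Im (cnj (b (2*j-k)) * alpha a b k))"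
    proof (cases "even k")
      case True
      then have "odd (2*j-k+1)" using k by auto
      then show ?thesis using True by (simp add: mult.commute)
    next
      case False
      then have "even (2*j-k+1)" using k by auto
      then show ?thesis using False by (simp add: mult.commute)
    qed
  qed simp
  finally show ?thesis by (simp add: lam_plus_def)
qed


lemma fcnj_real: "fcnj C = C \<Longrightarrow> Im (fps_nth C n) = 0"
  by (rule Im_zero_if_cnj) (metis fcnj_nth)

lemma mult_low_zero:
  fixes f g :: "complex fps"
  assumes "fps_nth f 0 = 0" "fps_nth g 0 = 0" "n < 2"
  shows "fps_nth (f * g) n = 0"
proof -
  have "n = 0 \<or> n = Suc 0" using assms(3) by auto
  then show ?thesis using assms(1,2) by (auto simp: fps_mult_nth)
qed

lemma selfprod_real: "Im (fps_nth (f * fcnj f) n) = 0"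
proof (rule fcnj_real)
  show "fcnj (f * fcnj f) = f * fcnj f" by (simp only: fcnj_mult fcnj_fcnj mult.commute)
qed

lemma key_A:
  fixes E C :: "complex fps"
  assumes E0: "fps_nth E 0 = 1" and ER: "\<forall>i\<le>N. Im (fps_nth E i) = 0"
    and CR: "\<forall>n. Im (fps_nth C n) = 0" and C0: "fps_nth C 0 = 0" and C1: "fps_nth C 1 = 0"
    and j: "j \<le> N + 2"
  shows "Im (fps_nth (inverse E * C) j) = 0"
proof -
  have "Im (fps_nth (inverse E) i * fps_nth C (j - i)) = 0" if "i \<in> {0..j}" for i
  proof (cases "j - i < 2")
    case True
    then have "j - i = 0 \<or> j - i = 1" by auto
    then show ?thesis using C0 C1 by auto
  next
    case False
    then have "i \<le> N" using j by auto
    then have "Im (fps_nth (inverse E) i) = 0" using inverse_real[OF E0 ER] by blast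
    then show ?thesis using CR by simp
  qed
  then show ?thesis by (simp add: fps_mult_nth)
qed

lemma fcnj_falt: "fcnj (falt f) = falt (fcnj f)"
  by (simp add: fps_eq_iff)

lemma falt_falt[simp]: "falt (falt f) = f"
  by (simp add: fps_eq_iff)

lemma falt_inverse:
  fixes E :: "complex fps"
  assumes "falt E = E" "fps_nth E 0 \<noteq> 0"
  shows "falt (inverse E) = inverse E"
proof -
  have "falt (inverse E) * E = 1"
    using falt_mult[of "inverse E" E] assms inverse_mult_eq_1[OF assms(2)] by simp
  then have "falt (inverse E) = falt (inverse E) * (E * inverse E)"
    using inverse_mult_eq_1'[OF assms(2)] by simp
  also have "\<dots> = inverse E"
    by (metis \<open>falt (inverse E) * E = 1\<close> mult.assoc mult_1)
  finally show ?thesis .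
qed

lemma altprod_sym: "falt (fcnj (falt f * fcnj f)) = falt f * fcnj f"
proof -
  have "falt (fcnj (falt f * fcnj f)) = falt (falt (fcnj f) * f)"
    by (simp only: fcnj_mult fcnj_falt fcnj_fcnj)
  also have "\<dots> = fcnj f * falt f" by (simp only: falt_mult falt_falt)
  finally show ?thesis by (simp only: mult.commute)
qed

lemma Bf0[simp]: "fps_nth (Bf b) 0 = 0" by (simp add: Bf_def)
lemma Bef0[simp]: "fps_nth (Bef b) 0 = 0" by (simp add: Bef_def)
lemma Ef0[simp]: "fps_nth (Ef a) 0 = 1" by (simp add: Ef_def)
lemma E2f0[simp]: "fps_nth (E2f a) 0 = 1" by (simp add: E2f_def)

lemma falt_Ef: "falt (Ef a) = Ef a"
  by (simp add: fps_eq_iff Ef_def)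

lemma key_B:
  fixes E D :: "complex fps"
  assumes E0: "fps_nth E 0 = 1" and ER: "\<forall>i\<le>N. Im (fps_nth E i) = 0" and Ealt: "falt E = E"
    and DR: "falt (fcnj D) = D" and D0: "fps_nth D 0 = 0"
    and j: "2 * j \<le> N + 1"
  shows "Im (fps_nth (inverse E * D) (2*j)) = 0"
proof -
  have Ralt: "falt (inverse E) = inverse E" using falt_inverse[OF Ealt] E0 by simp
  have "Im (fps_nth (inverse E) i * fps_nth D (2*j - i)) = 0" if "i \<in> {0..2*j}" for i
  proof (cases "odd i")
    case True
    have "fps_nth (falt (inverse E)) i = fps_nth (inverse E) i" using Ralt by simp
    then have "fps_nth (inverse E) i = 0" using True by simp
    then show ?thesis by simp
  next
    case False
    show ?thesis
    proof (cases "i = 2*j")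
      case True then show ?thesis using D0 by simp
    next
      case False2: False
      then have "i \<le> N" using that j False by auto
      then have "Im (fps_nth (inverse E) i) = 0" using inverse_real[OF E0 ER] by blast
      moreover have "even (2*j - i)" using False by auto
      then have "fps_nth (falt (fcnj D)) (2*j - i) = cnj (fps_nth D (2*j - i))" by simp
      then have "cnj (fps_nth D (2*j - i)) = fps_nth D (2*j - i)" using DR by simp
      then have "Im (fps_nth D (2*j - i)) = 0" by (rule Im_zero_if_cnj)
      ultimately show ?thesis by simp
    qed
  qed
  then show ?thesis by (simp add: fps_mult_nth)
qed


theorem lemma2p3:
  fixes m jstar :: nat and a b :: "nat \<Rightarrow> complex"
  assumes "m \<ge> 1"
    and "jstar \<le> m - 1"
    and "\<forall>j. 1 \<le> j \<and> j \<le> jstar \<longrightarrow> lam2 a b j = 0"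
  shows "(\<forall>j. 1 \<le> j \<and> j \<le> jstar \<longrightarrow> Im (a (2*j)) = 0 \<and> lam_plus a b (2*j) = 0)
       \<and> (\<forall>j. 1 \<le> j \<and> j \<le> 2*jstar + 3 \<and> j \<le> 2*m - 1 \<longrightarrow> lam_minus a b j = 0)"
proof -
  have ImA: "1 \<le> j \<and> j \<le> jstar \<longrightarrow> Im (a (2*j)) = 0" for j
  proof (induction j rule: less_induct)
    case (less j)
    show ?case
    proof
      assume j: "1 \<le> j \<and> j \<le> jstar"
      have ER: "\<forall>i\<le>j-1. Im (fps_nth (E2f a) i) = 0"
        using less.IH j by (auto simp: E2f_def)
      have "Im (fps_nth (inverse (E2f a) * (Bef b * fcnj (Bef b))) j) = 0"
        by (rule key_A[OF E2f0 ER selfprod_real[THEN allI]]) (use j in \<open>simp_all add: mult_low_zero\<close>)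
      then have "Im (fps_nth (Gaf a b * fcnj (Bef b)) j) = 0"
        by (simp add: Gaf_eq mult.assoc)
      then show "Im (a (2*j)) = 0" using assms(3) j lam2_eq[of a b j] by simp
    qed
  qed
  have ER: "\<forall>i\<le>2*jstar+1. Im (fps_nth (Ef a) i) = 0"
  proof (intro allI impI)
    fix i assume i: "i \<le> 2*jstar+1"
    show "Im (fps_nth (Ef a) i) = 0"
    proof (cases "i = 0 \<or> odd i")
      case True then show ?thesis by (auto simp: Ef_def)
    next
      case False
      then have "even i" "i \<noteq> 0" by auto
      then obtain k where k0: "i = 2*k" by (auto elim: evenE)
      with \<open>i \<noteq> 0\<close> have k: "i = 2*k" "k \<ge> 1" by auto
      then have "k \<le> jstar" using i by auto
      then show ?thesis using ImA[of k] k False by (auto simp: Ef_def)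
    qed
  qed
  have P1: "Im (a (2*j)) = 0 \<and> lam_plus a b (2*j) = 0" if j: "1 \<le> j" "j \<le> jstar" for j
  proof -
    have eqF: "falt (Alf a b) * fcnj (Bf b) = inverse (Ef a) * (falt (Bf b) * fcnj (Bf b))"
    proof -
      have Ri: "falt (inverse (Ef a)) = inverse (Ef a)" by (rule falt_inverse[OF falt_Ef]) simp
      show ?thesis by (simp only: Alf_eq falt_mult Ri mult.assoc)
    qed
    have imF: "Im (fps_nth (inverse (Ef a) * (falt (Bf b) * fcnj (Bf b))) (2*j)) = 0"
      using key_B[of "Ef a" "2*jstar+1" "falt (Bf b) * fcnj (Bf b)" j] ER falt_Ef altprod_sym j by simp
    have "Im (fps_nth (falt (Alf a b) * fcnj (Bf b)) (2*j)) = 0" using imF by (simp only: eqF)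
    then show ?thesis using ImA[of j] j lam_plus_eq[of a b j] by simp
  qed
  have P2: "lam_minus a b j = 0" if j: "1 \<le> j" "j \<le> 2*jstar + 3" for j
  proof -
    have "Im (fps_nth (inverse (Ef a) * (Bf b * fcnj (Bf b))) j) = 0"
      by (rule key_A[OF Ef0 ER selfprod_real[THEN allI]]) (use j in \<open>simp_all add: mult_low_zero\<close>)
    then show ?thesis by (simp add: lam_minus_eq Alf_eq mult.assoc)
  qed
  show ?thesis using P1 P2 by blast
qed

end
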